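(* For every positive integer $n$, the map $\Psi_{\mathrm{PF}\to\mathrm{Luk}}$ restricts to a bijection $\mathrm{UPF}_n^{\mathrm{inc}}\to\mathrm{Motz}_n^{\le 1}$. Moreover, $|\mathrm{UPF}_n^{\mathrm{inc}}|=|\mathrm{Motz}_n^{\le 1}|=2^{n-1}$.
   Context: Let $[n]=\{1,\dots,n\}$. A parking preference is $p=(p_1,\dots,p_n)\in[n]^n$; cars $1,\dots,n$ enter in order and car $i$ parks in the first unoccupied spot $k\ge p_i$ among spots $1,\dots,n$, failing if there is none. $p$ is a parking function if all cars park. If car $i$ parks in spot $o_i$, its displacement is $d_i=o_i-p_i$. A parking function is unit-interval if $\max_i d_i\le 1$. $\mathrm{UPF}_n^{\mathrm{inc}}$ is the set of unit-interval parking functions with $p_1\le\dots\le p_n$. A Łukasiewicz word of length $n$ is a sequence $\ell=(\ell_1,\dots,\ell_n)$ of integers $\ell_i\ge-1$ with $h(\ell;k):=\sum_{i=1}^k\ell_i\ge0$ for all $k\in[n]$ and $h(\ell;n)=0$ (viewed as the lattice path from $(0,0)$ with steps $(\ell_i+1,\ell_i)$). It is a Motzkin path if all $\ell_i\le 1$. $\mathrm{Motz}_n^{\le1}$ is the set of Motzkin paths of length $n$ of height at most one, i.e. with $h(\ell;k)\le 1$ for all $k$. $\Psi_{\mathrm{PF}\to\mathrm{Luk}}(p)=(\ell_1,\dots,\ell_n)$ with $\ell_i=|\{k\in[n]: p_k=i\}|-1$. *)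

theory Defs
  imports Main
begin

(* Parking preferences and outcomes are lists of length n; entry i (0-based list
   index) corresponds to car i+1.  Spots are 1..n. *)

definition pref_set :: "nat \<Rightarrow> nat list set" where
  "pref_set n = {p. length p = n \<and> (\<forall>x\<in>set p. 1 \<le> x \<and> x \<le> n)}"

fun park :: "nat \<Rightarrow> nat set \<Rightarrow> nat list \<Rightarrow> nat list option" where
  "park n occ [] = Some []"
| "park n occ (a # ps) =
     (if \<exists>k. a \<le> k \<and> k \<le> n \<and> k \<notin> occ
      then (let s = (LEAST k. a \<le> k \<and> k \<le> n \<and> k \<notin> occ) in
              map_option (\<lambda>os. s # os) (park n (insert s occ) ps))
      else None)"

definition outcome :: "nat \<Rightarrow> nat list \<Rightarrow> nat list option" where
  "outcome n p = park n {} p"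

definition is_parking_function :: "nat \<Rightarrow> nat list \<Rightarrow> bool" where
  "is_parking_function n p \<longleftrightarrow> p \<in> pref_set n \<and> outcome n p \<noteq> None"

definition is_unit_interval_pf :: "nat \<Rightarrow> nat list \<Rightarrow> bool" where
  "is_unit_interval_pf n p \<longleftrightarrow> is_parking_function n p \<and>
     (\<forall>i<n. the (outcome n p) ! i - p ! i \<le> 1)"

definition UPF_inc :: "nat \<Rightarrow> nat list set" where
  "UPF_inc n = {p. is_unit_interval_pf n p \<and> sorted p}"

definition height :: "int list \<Rightarrow> nat \<Rightarrow> int" where
  "height l k = sum_list (take k l)"

definition is_luk_word :: "nat \<Rightarrow> int list \<Rightarrow> bool" where
  "is_luk_word n l \<longleftrightarrow> length l = n \<and> (\<forall>x\<in>set l. x \<ge> -1) \<and>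
     (\<forall>k\<in>{1..n}. height l k \<ge> 0) \<and> height l n = 0"

definition is_motzkin :: "nat \<Rightarrow> int list \<Rightarrow> bool" where
  "is_motzkin n l \<longleftrightarrow> is_luk_word n l \<and> (\<forall>x\<in>set l. x \<le> 1)"

definition Motz_le1 :: "nat \<Rightarrow> int list set" where
  "Motz_le1 n = {l. is_motzkin n l \<and> (\<forall>k\<in>{1..n}. height l k \<le> 1)}"

definition Psi_PF_Luk :: "nat \<Rightarrow> nat list \<Rightarrow> int list" where
  "Psi_PF_Luk n p = map (\<lambda>i. int (card {k. k < n \<and> p ! k = i}) - 1) [1..<n+1]"

end

theory Submission
  imports Defs
begin

lemma park_props:
  "park n occ q = Some os \<Longrightarrow> length os = length q \<and> distinct os \<and> set os \<inter> occ = {}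
     \<and> (\<forall>j<length q. q!j \<le> os!j \<and> os!j \<le> n)"
proof (induction q arbitrary: occ os)
  case Nil
  then show ?case by simp
next
  case (Cons a ps)
  define s where "s = (LEAST k. a \<le> k \<and> k \<le> n \<and> k \<notin> occ)"
  have ex: "\<exists>k. a \<le> k \<and> k \<le> n \<and> k \<notin> occ"
    using Cons.prems by (auto split: if_splits)
  have s: "a \<le> s \<and> s \<le> n \<and> s \<notin> occ" unfolding s_def using ex by (rule LeastI_ex)
  obtain os' where os': "park n (insert s occ) ps = Some os'" and oseq: "os = s # os'"
    using Cons.prems ex by (auto simp: Let_def s_def[symmetric])
  from Cons.IH[OF os'] have ih: "length os' = length ps \<and> distinct os' \<and> set os' \<inter> insert s occ = {}
     \<and> (\<forall>j<length ps. ps!j \<le> os'!j \<and> os'!j \<le> n)" .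
  show ?case
  proof (intro conjI allI impI)
    fix j assume "j < length (a # ps)"
    then show "(a # ps) ! j \<le> os ! j" "os ! j \<le> n" using ih s oseq by (cases j; auto)+
  qed (use ih s oseq in auto)
qed

lemma park_fill:
  "m + length q \<le> n \<Longrightarrow> (\<forall>j<length q. 1 \<le> q!j \<and> q!j \<le> m+j+1) \<Longrightarrow>
     park n {1..m} q = Some [m+1..<m+1+length q]"
proof (induction q arbitrary: m)
  case Nil
  then show ?case by simp
next
  case (Cons a ps)
  have a: "1 \<le> a" "a \<le> m+1" using Cons.prems(2) by (auto dest: spec[of _ 0])
  have ex: "\<exists>k. a \<le> k \<and> k \<le> n \<and> k \<notin> {1..m}"
    using a Cons.prems(1) by (intro exI[of _ "m+1"]) auto
  have L: "(LEAST k. a \<le> k \<and> k \<le> n \<and> k \<notin> {1..m}) = m+1"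
    by (rule Least_equality) (use a Cons.prems(1) in auto)
  have ins: "insert (m+1) {1..m} = {1..Suc m}" by auto
  have ih: "park n {1..Suc m} ps = Some [Suc m+1..<Suc m+1+length ps]"
  proof (rule Cons.IH)
    show "Suc m + length ps \<le> n" using Cons.prems(1) by simp
    show "\<forall>j<length ps. 1 \<le> ps ! j \<and> ps ! j \<le> Suc m + j + 1"
    proof (intro allI impI)
      fix j assume "j < length ps"
      then show "1 \<le> ps ! j \<and> ps ! j \<le> Suc m + j + 1"
        using Cons.prems(2) by (auto dest: spec[of _ "Suc j"])
    qed
  qed
  have "[m+1..<m+1+length (a#ps)] = (m+1) # [Suc m+1..<Suc m+1+length ps]"
    by (simp add: upt_conv_Cons del: upt_Suc)
  then show ?case using ex L ins ih by (simp add: Let_def)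
qed

definition Aset :: "nat \<Rightarrow> nat list set" where
  "Aset n = {p. length p = n \<and> (\<forall>k<n. p!k = Suc k \<or> (p!k = k \<and> 0 < k))}"

lemma UPF_char: "UPF_inc n = Aset n"
proof
  show "UPF_inc n \<subseteq> Aset n"
  proof
    fix p assume "p \<in> UPF_inc n"
    then have len: "length p = n" and vals: "\<forall>x\<in>set p. 1 \<le> x \<and> x \<le> n"
      and srt: "sorted p" and oc: "outcome n p \<noteq> None"
      and disp: "\<forall>i<n. the (outcome n p) ! i - p ! i \<le> 1"
      by (auto simp: UPF_inc_def is_unit_interval_pf_def is_parking_function_def pref_set_def)
    obtain os where os: "park n {} p = Some os" using oc by (auto simp: outcome_def)
    note pp = park_props[OF os]
    have bnd: "p!k \<le> k+1" if k: "k < n" for k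
    proof (rule ccontr)
      assume "\<not> p!k \<le> k+1"
      then have big: "p!k \<ge> k+2" by simp
      have sub: "(nth os) ` {k..<n} \<subseteq> {k+2..n}"
      proof
        fix y assume "y \<in> (nth os) ` {k..<n}"
        then obtain j where j: "k \<le> j" "j < n" "y = os!j" by auto
        have "p!k \<le> p!j" using srt j len by (simp add: sorted_iff_nth_mono)
        then show "y \<in> {k+2..n}" using pp j len big by auto
      qed
      have inj: "inj_on (nth os) {k..<n}" using pp len by (intro inj_on_nth) auto
      have "card ((nth os) ` {k..<n}) \<le> card {k+2..n}" using sub by (intro card_mono) auto
      then have "n - k \<le> Suc n - (k+2)" using card_image[OF inj] by simp
      then show False using k by simp
    qed
    have "park n {1..0} p = Some [0+1..<0+1+length p]"
    proof (rule park_fill)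
      show "\<forall>j<length p. 1 \<le> p ! j \<and> p ! j \<le> 0 + j + 1"
        using bnd vals len by (auto simp: set_conv_nth)
    qed (use len in simp)
    then have "os = [1..<n+1]" using os len by simp
    then have "\<forall>k<n. the (outcome n p) ! k = Suc k" using os by (simp add: outcome_def del: upt_Suc)
    then have "\<forall>k<n. Suc k - p!k \<le> 1" using disp by simp
    then show "p \<in> Aset n" unfolding Aset_def
    proof (intro CollectI conjI allI impI len)
      fix k assume k: "k < n" and d: "\<forall>k<n. Suc k - p!k \<le> 1"
      have "p!k \<le> Suc k" using bnd k by simp
      moreover have "Suc k - p!k \<le> 1" using d k by simp
      moreover have "1 \<le> p!k" using vals k len by (auto simp: set_conv_nth)
      ultimately show "p!k = Suc k \<or> (p!k = k \<and> 0 < k)" by linarith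
    qed
  qed
next
  show "Aset n \<subseteq> UPF_inc n"
  proof
    fix p assume "p \<in> Aset n"
    then have len: "length p = n" and pk: "\<forall>k<n. p!k = Suc k \<or> (p!k = k \<and> 0 < k)"
      by (auto simp: Aset_def)
    have "park n {1..0} p = Some [0+1..<0+1+length p]"
    proof (rule park_fill)
      show "\<forall>j<length p. 1 \<le> p ! j \<and> p ! j \<le> 0 + j + 1"
        using pk len by fastforce
    qed (use len in simp)
    then have oc: "outcome n p = Some [1..<n+1]" using len by (simp add: outcome_def)
    have pref: "p \<in> pref_set n" using pk len
      by (fastforce simp: pref_set_def set_conv_nth)
    have srt: "sorted p"
      unfolding sorted_iff_nth_mono
    proof (intro allI impI)
      fix i j assume "i \<le> j" "j < length p"
      then show "p!i \<le> p!j" using pk[rule_format, of i] pk[rule_format, of j] len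
        by (cases "i = j") auto
    qed
    have "\<forall>i<n. the (outcome n p) ! i - p ! i \<le> 1" using oc pk by (auto simp del: upt_Suc)
    then show "p \<in> UPF_inc n" using oc pref srt
      by (auto simp: UPF_inc_def is_unit_interval_pf_def is_parking_function_def)
  qed
qed


definition D :: "(nat \<Rightarrow> int) \<Rightarrow> nat \<Rightarrow> int list" where
  "D t n = map (\<lambda>i. t (Suc i) - t i) [0..<n]"

lemma height_D: "k \<le> n \<Longrightarrow> height (D t n) k = t k - t 0"
proof (induction k)
  case 0
  then show ?case by (simp add: height_def)
next
  case (Suc k)
  have "take (Suc k) (D t n) = take k (D t n) @ [D t n ! k]"
    using Suc.prems by (intro take_Suc_conv_app_nth) (simp add: D_def)
  then have "height (D t n) (Suc k) = height (D t n) k + (t (Suc k) - t k)"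
    using Suc.prems by (simp add: height_def D_def)
  then show ?case using Suc by simp
qed

lemma D_height: "length l = n \<Longrightarrow> D (height l) n = l"
proof (rule nth_equalityI)
  assume len: "length l = n"
  then show "length (D (height l) n) = length l" by (simp add: D_def)
  fix i assume "i < length (D (height l) n)"
  then have i: "i < length l" using len by (simp add: D_def)
  have "take (Suc i) l = take i l @ [l ! i]" using i by (rule take_Suc_conv_app_nth)
  then show "D (height l) n ! i = l ! i" using i len by (simp add: D_def height_def)
qed

lemma D_cong: "(\<And>k. k \<le> n \<Longrightarrow> t k = t' k) \<Longrightarrow> D t n = D t' n"
  by (simp add: D_def)

definition sig :: "nat \<Rightarrow> nat list \<Rightarrow> nat \<Rightarrow> int" where
  "sig n p k = (if k < n then int (Suc k) - int (p!k) else 0)"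

lemma sig01: "p \<in> Aset n \<Longrightarrow> sig n p k = 0 \<or> sig n p k = 1"
  by (auto simp: sig_def Aset_def dest!: spec[of _ k])

lemma sig0: "p \<in> Aset n \<Longrightarrow> sig n p 0 = 0"
  by (auto simp: sig_def Aset_def dest!: spec[of _ 0])

lemma sign: "sig n p n = 0"
  by (simp add: sig_def)

lemma Psi_A: "p \<in> Aset n \<Longrightarrow> Psi_PF_Luk n p = D (sig n p) n"
proof (rule nth_equalityI)
  assume pA: "p \<in> Aset n"
  then have len: "length p = n" and pk: "\<forall>k<n. p!k = Suc k \<or> (p!k = k \<and> 0 < k)"
    by (auto simp: Aset_def)
  show "length (Psi_PF_Luk n p) = length (D (sig n p) n)"
    by (simp add: Psi_PF_Luk_def D_def del: upt_Suc)
  fix i assume "i < length (Psi_PF_Luk n p)"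
  then have i: "i < n" by (simp add: Psi_PF_Luk_def del: upt_Suc)
  have S: "{k. k < n \<and> p!k = Suc i} =
      {k. (k = i \<and> p!i = Suc i) \<or> (k = Suc i \<and> Suc i < n \<and> p!(Suc i) = Suc i)}"
  proof (intro set_eqI iffI)
    fix k assume "k \<in> {k. k < n \<and> p!k = Suc i}"
    then show "k \<in> {k. (k = i \<and> p!i = Suc i) \<or> (k = Suc i \<and> Suc i < n \<and> p!(Suc i) = Suc i)}"
      using pk[rule_format, of k] by auto
  qed (use i in auto)
  have c2: "card {k::nat. k = i \<or> k = Suc i} = 2"
  proof -
    have "{k::nat. k = i \<or> k = Suc i} = {i, Suc i}" by auto
    then show ?thesis by simp
  qed
  have lhs: "Psi_PF_Luk n p ! i = int (card {k. k < n \<and> p!k = Suc i}) - 1"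
    using i by (simp add: Psi_PF_Luk_def del: upt_Suc)
  have rhs: "D (sig n p) n ! i = sig n p (Suc i) - sig n p i"
    using i by (simp add: D_def)
  show "Psi_PF_Luk n p ! i = D (sig n p) n ! i"
    unfolding lhs rhs S
    using pk[rule_format, of i] pk[rule_format, of "Suc i"] i
    by (cases "Suc i < n") (auto simp: sig_def c2)
qed

definition phi :: "nat \<Rightarrow> int list \<Rightarrow> nat list" where
  "phi n l = map (\<lambda>k. Suc k - nat (height l k)) [0..<n]"

lemma motz_facts:
  assumes "l \<in> Motz_le1 n"
  shows "length l = n" "\<And>k. k \<le> n \<Longrightarrow> height l k = 0 \<or> height l k = 1" "height l n = 0"
    "height l 0 = 0"
proof -
  have A: "length l = n" "\<forall>k\<in>{1..n}. height l k \<ge> 0" "height l n = 0"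
    "\<forall>k\<in>{1..n}. height l k \<le> 1"
    using assms by (auto simp: Motz_le1_def is_motzkin_def is_luk_word_def)
  show "length l = n" "height l n = 0" using A by auto
  show H0: "height l 0 = 0" by (simp add: height_def)
  fix k assume k: "k \<le> n"
  show "height l k = 0 \<or> height l k = 1"
  proof (cases "k = 0")
    case True then show ?thesis using H0 by simp
  next
    case False
    then have "k \<in> {1..n}" using k by simp
    then have "0 \<le> height l k" "height l k \<le> 1" using A by auto
    then show ?thesis by linarith
  qed
qed

lemma bij_A: "bij_betw (Psi_PF_Luk n) (Aset n) (Motz_le1 n)"
proof (rule bij_betw_byWitness[where f' = "phi n"])
  have phiA: "phi n l \<in> Aset n" if l: "l \<in> Motz_le1 n" for l
  proof -
    note M = motz_facts[OF l]
    show ?thesis unfolding Aset_def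
    proof (intro CollectI conjI allI impI)
      show "length (phi n l) = n" by (simp add: phi_def)
      fix k assume k: "k < n"
      have e: "phi n l ! k = Suc k - nat (height l k)" using k by (simp add: phi_def)
      show "phi n l ! k = Suc k \<or> phi n l ! k = k \<and> 0 < k"
        using M(2)[of k] M(4) k unfolding e by (cases "k = 0") auto
    qed
  qed
  then show "phi n ` Motz_le1 n \<subseteq> Aset n" by auto
  show "\<forall>l\<in>Motz_le1 n. Psi_PF_Luk n (phi n l) = l"
  proof
    fix l assume l: "l \<in> Motz_le1 n"
    note M = motz_facts[OF l]
    have "Psi_PF_Luk n (phi n l) = D (sig n (phi n l)) n" by (rule Psi_A[OF phiA[OF l]])
    also have "\<dots> = D (height l) n"
    proof (rule D_cong)
      fix k assume k: "k \<le> n"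
      show "sig n (phi n l) k = height l k"
      proof (cases "k < n")
        case True
        then show ?thesis using M(2)[of k] by (auto simp: sig_def phi_def)
      next
        case False
        then show ?thesis using k M(3) by (simp add: sig_def)
      qed
    qed
    also have "\<dots> = l" using M(1) by (rule D_height)
    finally show "Psi_PF_Luk n (phi n l) = l" .
  qed
  show "\<forall>p\<in>Aset n. phi n (Psi_PF_Luk n p) = p"
  proof
    fix p assume pA: "p \<in> Aset n"
    then have len: "length p = n" and pk: "\<forall>k<n. p!k = Suc k \<or> (p!k = k \<and> 0 < k)"
      by (auto simp: Aset_def)
    show "phi n (Psi_PF_Luk n p) = p"
    proof (rule nth_equalityI)
      show "length (phi n (Psi_PF_Luk n p)) = length p" using len by (simp add: phi_def)
      fix k assume "k < length (phi n (Psi_PF_Luk n p))"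
      then have k: "k < n" by (simp add: phi_def)
      have "height (Psi_PF_Luk n p) k = sig n p k"
        using Psi_A[OF pA] height_D[of k n "sig n p"] sig0[OF pA] k by simp
      then show "phi n (Psi_PF_Luk n p) ! k = p ! k"
        using k pk[rule_format, of k] by (auto simp: phi_def sig_def)
    qed
  qed
  show "Psi_PF_Luk n ` Aset n \<subseteq> Motz_le1 n"
  proof
    fix l assume "l \<in> Psi_PF_Luk n ` Aset n"
    then obtain p where pA: "p \<in> Aset n" and l: "l = D (sig n p) n"
      using Psi_A by auto
    have H: "height l k = sig n p k" if "k \<le> n" for k
      using height_D[OF that, of "sig n p"] sig0[OF pA] l by simp
    have len: "length l = n" using l by (simp add: D_def)
    have el: "-1 \<le> x \<and> x \<le> 1" if "x \<in> set l" for x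
    proof -
      obtain i where i: "i < n" "x = l ! i" using \<open>x \<in> set l\<close> len by (auto simp: set_conv_nth)
      have "x = sig n p (Suc i) - sig n p i" using i l by (simp add: D_def)
      then show ?thesis using sig01[OF pA, of i] sig01[OF pA, of "Suc i"] by auto
    qed
    show "l \<in> Motz_le1 n"
      unfolding Motz_le1_def is_motzkin_def is_luk_word_def
    proof (intro CollectI conjI ballI len)
      fix k assume "k \<in> {1..n}"
      then have "height l k = sig n p k" using H by simp
      then show "0 \<le> height l k" "height l k \<le> 1" using sig01[OF pA, of k] by auto
    next
      show "height l n = 0" using H[of n] sign by simp
    qed (use el in auto)
  qed
qed

lemma card_A: "card (Aset n) = 2 ^ (n - 1)"
proof -
  define B where "B = {xs :: bool list. set xs \<subseteq> UNIV \<and> length xs = n - 1}"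
  have cB: "card B = 2 ^ (n - 1)" unfolding B_def by (subst card_lists_length_eq) auto
  define enc where "enc p = map (\<lambda>k. p!k = k) [1..<n]" for p :: "nat list"
  define dec where "dec b = map (\<lambda>k. if 0 < k \<and> b!(k-1) then k else Suc k) [0..<n]" for b :: "bool list"
  have "bij_betw enc (Aset n) B"
  proof (rule bij_betw_byWitness[where f' = dec])
    show "\<forall>p\<in>Aset n. dec (enc p) = p"
    proof
      fix p assume "p \<in> Aset n"
      then have len: "length p = n" and pk: "\<forall>k<n. p!k = Suc k \<or> (p!k = k \<and> 0 < k)"
        by (auto simp: Aset_def)
      show "dec (enc p) = p"
      proof (rule nth_equalityI)
        show "length (dec (enc p)) = length p" using len by (simp add: dec_def)
        fix k assume "k < length (dec (enc p))"
        then have k: "k < n" by (simp add: dec_def)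
        show "dec (enc p) ! k = p ! k"
          using k pk[rule_format, of k] by (auto simp: dec_def enc_def nth_append)
      qed
    qed
    show "\<forall>b\<in>B. enc (dec b) = b"
    proof
      fix b assume "b \<in> B"
      then have len: "length b = n - 1" by (simp add: B_def)
      show "enc (dec b) = b"
      proof (rule nth_equalityI)
        show "length (enc (dec b)) = length b" using len by (simp add: enc_def)
        fix i assume "i < length (enc (dec b))"
        then have i: "Suc i < n" by (simp add: enc_def)
        have e1: "[1..<n] ! i = Suc i" using i by simp
        have e2: "map (\<lambda>k. if 0 < k \<and> b!(k-1) then k else Suc k) [0..<n] ! Suc i
            = (if b ! i then Suc i else Suc (Suc i))" using i by simp
        have "enc (dec b) ! i = (dec b ! ([1..<n] ! i) = [1..<n] ! i)"
          unfolding enc_def using i by (subst nth_map) auto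
        also have "\<dots> = (dec b ! Suc i = Suc i)" by (simp only: e1)
        also have "\<dots> = b ! i" unfolding dec_def e2 by simp
        finally show "enc (dec b) ! i = b ! i" .
      qed
    qed
    show "enc ` Aset n \<subseteq> B" by (auto simp: enc_def B_def)
    show "dec ` B \<subseteq> Aset n"
    proof
      fix p assume "p \<in> dec ` B"
      then obtain b where p: "p = dec b" by auto
      show "p \<in> Aset n" unfolding Aset_def
      proof (intro CollectI conjI allI impI)
        show "length p = n" using p by (simp add: dec_def)
        fix k assume k: "k < n"
        have "p ! k = (if 0 < k \<and> b!(k-1) then k else Suc k)"
          unfolding p dec_def using k by (subst nth_map) (auto intro: nth_upt)
        then show "p ! k = Suc k \<or> p ! k = k \<and> 0 < k" by auto
      qed
    qed
  qed
  then show ?thesis using bij_betw_same_card cB by metis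
qed

theorem theorem3p2:
  fixes n :: nat
  assumes "n \<ge> 1"
  shows "bij_betw (Psi_PF_Luk n) (UPF_inc n) (Motz_le1 n)
         \<and> card (UPF_inc n) = 2 ^ (n - 1)
         \<and> card (Motz_le1 n) = 2 ^ (n - 1)"
  using bij_A[of n] card_A[of n] bij_betw_same_card[OF bij_A[of n]]
  by (simp add: UPF_char)

end
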